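(* Let $\mathcal{A} = (Q, \Sigma, M, \alpha, \eta)$ be an $\mathbb{R}$-IFA. Then $L(\mathcal{A})$ is a regular language, and there is a deterministic finite automaton $\mathcal{B}$ with at most $2^{|Q|}$ states such that $L(\mathcal{B}) = L(\mathcal{A})$.
   Context: An $\mathbb{R}$-weighted automaton $\mathcal{A} = (Q, \Sigma, M, \alpha, \eta)$ consists of a finite set of states $Q$, a finite alphabet $\Sigma$, a map $M : \Sigma \to \mathbb{R}^{Q \times Q}$, an initial row vector $\alpha \in \mathbb{R}^Q$ and a final column vector $\eta \in \mathbb{R}^Q$. $M$ is extended to $\Sigma^*$ by $M(a_1\cdots a_k) = M(a_1)\cdots M(a_k)$ (and $M(\varepsilon)$ the identity), and $L_\mathcal{A}(w) = \alpha M(w) \eta$ for $w \in \Sigma^*$. $\mathcal{A}$ is an $\mathbb{R}$-IFA (image-binary finite automaton) if $L_\mathcal{A}(w) \in \{0,1\}$ for all $w \in \Sigma^*$; it then defines the language $L(\mathcal{A}) = \{w \in \Sigma^* \mid L_\mathcal{A}(w) = 1\}$. *)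

theory Defs
  imports "HOL-Analysis.Analysis"
begin

text \<open>States form a finite type 'q (so Q = UNIV, |Q| = CARD('q)),
  letters form a finite type 'a (the alphabet Sigma = UNIV).
  M a is a Q x Q real matrix, alpha is the initial row vector, eta the final column vector.\<close>

fun word_mat :: "('a \<Rightarrow> real^'q^'q) \<Rightarrow> 'a list \<Rightarrow> real^'q^'q" where
  "word_mat M [] = mat 1"
| "word_mat M (a # w) = M a ** word_mat M w"

definition wa_weight :: "('a \<Rightarrow> real^'q^'q) \<Rightarrow> real^'q \<Rightarrow> real^'q \<Rightarrow> 'a list \<Rightarrow> real" where
  "wa_weight M \<alpha> \<eta> w = (\<alpha> v* word_mat M w) \<bullet> \<eta>"

definition is_IFA :: "('a \<Rightarrow> real^'q^'q) \<Rightarrow> real^'q \<Rightarrow> real^'q \<Rightarrow> bool" where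
  "is_IFA M \<alpha> \<eta> \<longleftrightarrow> (\<forall>w. wa_weight M \<alpha> \<eta> w \<in> {0, 1})"

definition IFA_lang :: "('a \<Rightarrow> real^'q^'q) \<Rightarrow> real^'q \<Rightarrow> real^'q \<Rightarrow> 'a list set" where
  "IFA_lang M \<alpha> \<eta> = {w. wa_weight M \<alpha> \<eta> w = 1}"

definition is_DFA :: "nat set \<Rightarrow> nat \<Rightarrow> (nat \<Rightarrow> 'a \<Rightarrow> nat) \<Rightarrow> nat set \<Rightarrow> bool" where
  "is_DFA S s0 \<delta> F \<longleftrightarrow> finite S \<and> s0 \<in> S \<and> (\<forall>s\<in>S. \<forall>a. \<delta> s a \<in> S) \<and> F \<subseteq> S"

definition DFA_lang :: "nat \<Rightarrow> (nat \<Rightarrow> 'a \<Rightarrow> nat) \<Rightarrow> nat set \<Rightarrow> 'a list set" where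
  "DFA_lang s0 \<delta> F = {w. foldl \<delta> s0 w \<in> F}"

definition regular_lang :: "'a list set \<Rightarrow> bool" where
  "regular_lang L \<longleftrightarrow> (\<exists>S s0 \<delta> F. is_DFA S s0 \<delta> F \<and> DFA_lang s0 \<delta> F = L)"

end

theory Submission
  imports Defs "HOL-Library.FuncSet"
begin

lemma word_mat_append: "word_mat M (u @ v) = word_mat M u ** word_mat M v"
  by (induction u) (auto simp: matrix_mul_assoc matrix_mul_lid)

lemma wa_weight_append:
  "wa_weight M \<alpha> \<eta> (u @ v) = (\<alpha> v* word_mat M u) \<bullet> (word_mat M v *v \<eta>)"
  by (simp add: wa_weight_def word_mat_append vector_matrix_mul_assoc[symmetric] dot_lmul_matrix)

theorem theorem1:
  fixes M :: "'a::finite \<Rightarrow> real^'q::finite^'q"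
    and \<alpha> \<eta> :: "real^'q"
  assumes "is_IFA M \<alpha> \<eta>"
  shows "regular_lang (IFA_lang M \<alpha> \<eta>) \<and>
         (\<exists>S s0 \<delta> F. is_DFA S s0 \<delta> F \<and> card S \<le> 2 ^ CARD('q) \<and>
                     DFA_lang s0 \<delta> F = IFA_lang M \<alpha> \<eta>)"
proof -
  let ?wa = "wa_weight M \<alpha> \<eta>"
  let ?g = "\<lambda>v. word_mat M v *v \<eta>"
  let ?x = "\<lambda>u. \<alpha> v* word_mat M u"
  obtain B where B: "B \<subseteq> range ?g" "independent B" "range ?g \<subseteq> span B"
    using maximal_independent_subset by blast
  have finB: "finite B" and cardB: "card B \<le> CARD('q)"
    using independent_bound[OF B(2)] by auto
  define key where "key u = restrict (\<lambda>b. ?x u \<bullet> b) B" for u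
  have wa01: "?wa w \<in> {0,1}" for w using assms unfolding is_IFA_def by blast
  have keyeq: "?wa (u @ v) = ?wa (u' @ v)" if "key u = key u'" for u u' v
  proof -
    have "?g v \<in> span B" using B(3) by blast
    then obtain c where c: "?g v = (\<Sum>b\<in>B. c b *\<^sub>R b)"
      using span_finite[OF finB] by blast
    have eqb: "?x u \<bullet> b = ?x u' \<bullet> b" if "b \<in> B" for b
      using fun_cong[OF \<open>key u = key u'\<close>, of b] that by (simp add: key_def)
    have "?wa (u @ v) = (\<Sum>b\<in>B. c b * (?x u \<bullet> b))"
      by (simp add: wa_weight_append c inner_sum_right)
    also have "\<dots> = (\<Sum>b\<in>B. c b * (?x u' \<bullet> b))"
      using eqb by simp
    also have "\<dots> = ?wa (u' @ v)"
      by (simp add: wa_weight_append c inner_sum_right)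
    finally show ?thesis .
  qed
  have keyapp: "key (u @ w) = key (u' @ w)" if "key u = key u'" for u u' w
  proof
    fix b show "key (u @ w) b = key (u' @ w) b"
    proof (cases "b \<in> B")
      case True
      then obtain v where v: "b = ?g v" using B(1) by blast
      have "?x (u @ w) \<bullet> b = ?wa ((u @ w) @ v)" by (simp only: v wa_weight_append)
      also have "\<dots> = ?wa (u @ (w @ v))" by simp
      also have "\<dots> = ?wa (u' @ (w @ v))" using keyeq[OF that] .
      also have "\<dots> = ?x (u' @ w) \<bullet> b" by (simp only: v wa_weight_append append_assoc[symmetric])
      finally show ?thesis using True by (simp add: key_def)
    qed (simp add: key_def)
  qed
  define K where "K = range key"
  have KPi: "K \<subseteq> PiE B (\<lambda>_. {0::real,1})"
  proof
    fix k assume "k \<in> K"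
    then obtain u where k: "k = key u" by (auto simp: K_def)
    have "?x u \<bullet> b \<in> {0,1}" if "b \<in> B" for b
    proof -
      obtain v where v: "b = ?g v" using B(1) \<open>b \<in> B\<close> by blast
      show ?thesis using wa01[of "u @ v"] by (simp add: v wa_weight_append)
    qed
    then show "k \<in> PiE B (\<lambda>_. {0::real,1})" by (auto simp: k key_def)
  qed
  have finPi: "finite (PiE B (\<lambda>_. {0::real,1}))" using finB by (simp add: finite_PiE)
  have finK: "finite K" using KPi finPi finite_subset by blast
  have "card K \<le> card (PiE B (\<lambda>_. {0::real,1}))" using KPi finPi card_mono by blast
  also have "\<dots> = 2 ^ card B" using finB by (simp add: card_PiE numeral_2_eq_2)
  also have "\<dots> \<le> 2 ^ CARD('q)" using cardB by (simp add: power_increasing)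
  finally have cardK: "card K \<le> 2 ^ CARD('q)" .
  obtain h where h: "bij_betw h K {0..<card K}" using ex_bij_betw_finite_nat[OF finK] by blast
  define st where "st u = h (key u)" for u
  define S where "S = {0..<card K}"
  have stS: "st u \<in> S" for u using h unfolding st_def S_def K_def bij_betw_def by auto
  have st_key: "key u = key u'" if "st u = st u'" for u u'
    using h that unfolding st_def K_def bij_betw_def inj_on_def by auto
  define \<delta> where "\<delta> s a = st ((SOME u. st u = s) @ [a])" for s a
  define F where "F = {s \<in> S. \<exists>u. st u = s \<and> ?wa u = 1}"
  have step: "\<delta> (st u) a = st (u @ [a])" for u a
  proof -
    have "st (SOME u'. st u' = st u) = st u" by (rule someI) (rule refl)
    then have "key (SOME u'. st u' = st u) = key u" by (rule st_key)
    then show ?thesis unfolding \<delta>_def st_def using keyapp by metis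
  qed
  have run: "foldl \<delta> (st u) w = st (u @ w)" for u w
  proof (induction w arbitrary: u)
    case Nil then show ?case by simp
  next
    case (Cons a w) then show ?case by (simp add: step)
  qed
  have dfa: "is_DFA S (st []) \<delta> F"
    unfolding is_DFA_def S_def F_def \<delta>_def using stS S_def by auto
  have lang: "DFA_lang (st []) \<delta> F = IFA_lang M \<alpha> \<eta>"
  proof (rule set_eqI)
    fix w
    have "w \<in> DFA_lang (st []) \<delta> F \<longleftrightarrow> st w \<in> F"
      using run[of "[]" w] by (simp add: DFA_lang_def)
    also have "\<dots> \<longleftrightarrow> ?wa w = 1"
    proof
      assume "st w \<in> F"
      then obtain u where "st u = st w" "?wa u = 1" by (auto simp: F_def)
      then show "?wa w = 1" using keyeq[OF st_key, of u w "[]"] by simp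
    next
      assume "?wa w = 1" then show "st w \<in> F" using stS by (auto simp: F_def)
    qed
    finally show "w \<in> DFA_lang (st []) \<delta> F \<longleftrightarrow> w \<in> IFA_lang M \<alpha> \<eta>"
      by (simp add: IFA_lang_def)
  qed
  have cardS: "card S \<le> 2 ^ CARD('q)" using cardK by (simp add: S_def)
  show ?thesis unfolding regular_lang_def using dfa lang cardS by blast
qed

end
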